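(* Let $C'\ge 2$ and $m\ge 1$ be integers, let $f:\mathcal X\to\mathbb R^d$ be a fixed feature map and $D_1,\dots,D_{C'}$ class-conditional distributions on $\mathcal X$, under the standing assumptions in the context. Then \[ \mathrm{err}^{\mathrm{NCC}}_{m}(f)\le \frac{1}{C'}\sum_{i=1}^{C'}\sum_{j\neq i}\frac{4\tilde V_{ij}+\frac{12}{m}V_{ij}^2+\frac{6}{m}V_{ij}}{\bigl(1+\frac{v_j-v_i}{m d_{ij}^2}\bigr)^2}+\frac{1}{C'}\sum_{i=1}^{C'}\sum_{j\neq i}\frac{\frac{3}{m^3}\bigl(\Theta_{ij}+2(m-1)V_{ij}^2\bigr)}{\bigl(1+\frac{v_j-v_i}{m d_{ij}^2}\bigr)^2}. \]
   Context: Setup (nearest-class-centroid few-shot classification). Fix $f:\mathcal X\to\mathbb R^d$ and distributions $D_1,\dots,D_{C'}$ on $\mathcal X$. For a class $c$, let $z_c=f(x)$ with $x\sim D_c$, $\mu_c:=\mathbb E[z_c]$, $\Sigma_c:=\mathrm{Cov}(z_c)$, $v_c:=\mathrm{tr}(\Sigma_c)$, and $M_{4,c}:=\mathbb E\|z_c-\mu_c\|_2^4$, assumed finite. For each class $c$ draw a support set $x_{c,1},\dots,x_{c,m}$ i.i.d. from $D_c$, independently across classes; let $\widehat\mu_c:=\frac1m\sum_{s=1}^m f(x_{c,s})$. NCC predicts $\widehat y(z)\in\arg\min_c\|z-\widehat\mu_c\|_2^2$ with a fixed tie-breaking rule; $\mathrm{err}^{\mathrm{NCC}}_m(f):=\frac1{C'}\sum_{i}\Pr(\widehat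 y(z_i)\neq i)$ with $z_i=f(x_i)$, $x_i\sim D_i$ independent of the support sets. For $i\neq j$: $d_{ij}:=\|\mu_j-\mu_i\|_2>0$, $u_{ij}:=(\mu_j-\mu_i)/d_{ij}$, $\tilde V_{ij}:=\frac{u_{ij}^\top\Sigma_iu_{ij}}{d_{ij}^2}$, $V_{ij}:=\frac{v_i+v_j}{d_{ij}^2}$, $\Theta_{ij}:=\frac{M_{4,i}+M_{4,j}}{d_{ij}^4}$. It is assumed that $d_{ij}^2+\frac{v_j-v_i}{m}>0$ for all $i\ne j$. *)

theory Defs
  imports "HOL-Probability.Probability"
begin

definition feat_mean :: "'x measure \<Rightarrow> ('x \<Rightarrow> 'a::euclidean_space) \<Rightarrow> 'a" where
  "feat_mean D f = (\<integral>x. f x \<partial>D)"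

definition feat_tvar :: "'x measure \<Rightarrow> ('x \<Rightarrow> 'a::euclidean_space) \<Rightarrow> real" where
  "feat_tvar D f = (\<integral>x. (norm (f x - feat_mean D f))^2 \<partial>D)"

definition feat_dirvar :: "'x measure \<Rightarrow> ('x \<Rightarrow> 'a::euclidean_space) \<Rightarrow> 'a \<Rightarrow> real" where
  "feat_dirvar D f u = (\<integral>x. (u \<bullet> (f x - feat_mean D f))^2 \<partial>D)"

definition feat_M4 :: "'x measure \<Rightarrow> ('x \<Rightarrow> 'a::euclidean_space) \<Rightarrow> real" where
  "feat_M4 D f = (\<integral>x. (norm (f x - feat_mean D f))^4 \<partial>D)"

definition tie_rule :: "(nat set \<Rightarrow> nat) \<Rightarrow> bool" where
  "tie_rule tb \<longleftrightarrow> (\<forall>A. A \<noteq> {} \<longrightarrow> tb A \<in> A)"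

definition ncc_pred :: "(nat set \<Rightarrow> nat) \<Rightarrow> nat \<Rightarrow> (nat \<Rightarrow> 'a::euclidean_space) \<Rightarrow> 'a \<Rightarrow> nat" where
  "ncc_pred tb C mu z =
     tb {c. c < C \<and> (\<forall>c'<C. (norm (z - mu c))^2 \<le> (norm (z - mu c'))^2)}"

text \<open>Support sets: S c s for class c < C and shot s < m, all independent,
  S c s ~ D c.\<close>

definition support_measure :: "nat \<Rightarrow> nat \<Rightarrow> (nat \<Rightarrow> 'x measure) \<Rightarrow> (nat \<Rightarrow> nat \<Rightarrow> 'x) measure" where
  "support_measure C m D = (\<Pi>\<^sub>M c\<in>{..<C}. (\<Pi>\<^sub>M s\<in>{..<m}. D c))"

definition emp_centroid :: "nat \<Rightarrow> ('x \<Rightarrow> 'a::euclidean_space) \<Rightarrow> (nat \<Rightarrow> nat \<Rightarrow> 'x) \<Rightarrow> nat \<Rightarrow> 'a" where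
  "emp_centroid m f S c = (1 / real m) *\<^sub>R (\<Sum>s<m. f (S c s))"

definition ncc_err :: "(nat set \<Rightarrow> nat) \<Rightarrow> nat \<Rightarrow> nat \<Rightarrow> (nat \<Rightarrow> 'x measure) \<Rightarrow> ('x \<Rightarrow> 'a::euclidean_space) \<Rightarrow> real" where
  "ncc_err tb C m D f =
     (1 / real C) * (\<Sum>i<C.
        measure (support_measure C m D \<Otimes>\<^sub>M D i)
          {\<omega> \<in> space (support_measure C m D \<Otimes>\<^sub>M D i).
             ncc_pred tb C (emp_centroid m f (fst \<omega>)) (f (snd \<omega>)) \<noteq> i})"

end

theory Submission
  imports Defs
begin


lemma integral_le_nonneg_bound:
  fixes f h :: "_ \<Rightarrow> real"
  assumes "integrable M h" "\<And>x. x \<in> space M \<Longrightarrow> f x \<le> h x" "\<And>x. x \<in> space M \<Longrightarrow> 0 \<le> f x"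
  shows "integral\<^sup>L M f \<le> integral\<^sup>L M h"
  using assms by (intro integral_mono') (auto intro: order_trans)

lemma integrable_dom:
  fixes g :: "_ \<Rightarrow> 'b::{banach, second_countable_topology}" and h :: "_ \<Rightarrow> real"
  assumes "integrable M h" "g \<in> borel_measurable M" "\<And>x. x \<in> space M \<Longrightarrow> norm (g x) \<le> h x"
  shows "integrable M g"
  using assms by (intro Bochner_Integration.integrable_bound[OF assms(1,2)]) (auto intro!: AE_I2 intro: order_trans[OF _ abs_ge_self])

lemma pow_le_1_pow4:
  fixes t :: real assumes "0 \<le> t"
  shows "t \<le> 1 + t^4" "t^2 \<le> 1 + t^4" "t^3 \<le> 1 + t^4"
proof -
  show "t \<le> 1 + t^4"
  proof (cases "t \<le> 1")
    case True then show ?thesis using assms by (smt (verit) zero_le_power)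
  next
    case False then have "t \<le> t^4" by (metis less_eq_real_def not_le one_le_numeral power_increasing power_one_right)
    then show ?thesis by simp
  qed
  show "t^2 \<le> 1 + t^4"
  proof (cases "t \<le> 1")
    case True then have "t^2 \<le> 1" using assms by (simp add: power_le_one)
    then show ?thesis by (smt (verit) zero_le_power assms)
  next
    case False then have "t^2 \<le> t^4" by (intro power_increasing) auto
    then show ?thesis by simp
  qed
  show "t^3 \<le> 1 + t^4"
  proof (cases "t \<le> 1")
    case True then have "t^3 \<le> 1" using assms by (simp add: power_le_one)
    then show ?thesis by (smt (verit) zero_le_power assms)
  next
    case False then have "t^3 \<le> t^4" by (intro power_increasing) auto
    then show ?thesis by simp
  qed
qed

lemma sum_pow4_le:
  fixes r :: "'i \<Rightarrow> real"
  assumes "finite I"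
  shows "(\<Sum>i\<in>I. r i)^4 \<le> real (card I)^3 * (\<Sum>i\<in>I. (r i)^4)"
proof -
  have a: "(\<Sum>i\<in>I. r i)\<^sup>2 \<le> (\<Sum>i\<in>I. (r i)\<^sup>2) * card I" by (rule sum_squared_le_sum_of_squares)
  have b: "(\<Sum>i\<in>I. (r i)\<^sup>2)\<^sup>2 \<le> (\<Sum>i\<in>I. ((r i)\<^sup>2)\<^sup>2) * card I" by (rule sum_squared_le_sum_of_squares)
  have "(\<Sum>i\<in>I. r i)^4 = ((\<Sum>i\<in>I. r i)\<^sup>2)\<^sup>2" by simp
  also have "\<dots> \<le> ((\<Sum>i\<in>I. (r i)\<^sup>2) * card I)\<^sup>2"
    using a by (intro power_mono) auto
  also have "\<dots> = (\<Sum>i\<in>I. (r i)\<^sup>2)\<^sup>2 * (card I)^2" by (simp add: power_mult_distrib)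
  also have "\<dots> \<le> (\<Sum>i\<in>I. ((r i)\<^sup>2)\<^sup>2) * card I * (card I)^2"
    using b by (intro mult_right_mono) auto
  also have "\<dots> = real (card I)^3 * (\<Sum>i\<in>I. (r i)^4)"
    by (simp add: power2_eq_square power3_eq_cube power4_eq_xxxx mult_ac)
  finally show ?thesis .
qed

lemma prod_one_if:
  fixes A :: "'i \<Rightarrow> 'b::comm_monoid_mult"
  assumes "finite I" "j \<in> I"
  shows "(\<Prod>c\<in>I. if c = j then A c else 1) = A j"
  using assms by (simp add: prod.remove[OF assms])
lemma prod_two_if:
  fixes A B :: "'i \<Rightarrow> 'b::comm_monoid_mult"
  assumes "finite I" "j \<in> I" "k \<in> I" "j \<noteq> k"
  shows "(\<Prod>c\<in>I. if c = j then A c else if c = k then B c else 1) = A j * B k"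
proof -
  have "(\<Prod>c\<in>I. if c = j then A c else if c = k then B c else 1)
      = A j * (\<Prod>c\<in>I - {j}. if c = j then A c else if c = k then B c else 1)"
    by (simp add: prod.remove[OF assms(1,2)])
  also have "(\<Prod>c\<in>I - {j}. if c = j then A c else if c = k then B c else 1)
      = (\<Prod>c\<in>I - {j}. if c = k then B c else 1)"
    by (intro prod.cong) auto
  also have "\<dots> = B k" using assms by (intro prod_one_if) auto
  finally show ?thesis .
qed

lemma marg:
  fixes M :: "'i \<Rightarrow> 'x measure" and g h :: "'x \<Rightarrow> real"
  assumes Pr: "\<And>c. c \<in> I \<Longrightarrow> prob_space (M c)" and fin: "finite I"
  shows marg1_int: "j \<in> I \<Longrightarrow> integrable (M j) g \<Longrightarrow> integrable (PiM I M) (\<lambda>\<omega>. g (\<omega> j))"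
    and marg1: "j \<in> I \<Longrightarrow> integrable (M j) g \<Longrightarrow> (\<integral>\<omega>. g (\<omega> j) \<partial>PiM I M) = integral\<^sup>L (M j) g"
    and marg2_int: "j \<in> I \<Longrightarrow> k \<in> I \<Longrightarrow> j \<noteq> k \<Longrightarrow> integrable (M j) g \<Longrightarrow> integrable (M k) h \<Longrightarrow>
        integrable (PiM I M) (\<lambda>\<omega>. g (\<omega> j) * h (\<omega> k))"
    and marg2: "j \<in> I \<Longrightarrow> k \<in> I \<Longrightarrow> j \<noteq> k \<Longrightarrow> integrable (M j) g \<Longrightarrow> integrable (M k) h \<Longrightarrow>
        (\<integral>\<omega>. g (\<omega> j) * h (\<omega> k) \<partial>PiM I M) = integral\<^sup>L (M j) g * integral\<^sup>L (M k) h"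
proof -
  define M' where "M' = (\<lambda>c. if c \<in> I then M c else count_space {undefined})"
  interpret M': prob_space "M' c" for c
    using Pr by (cases "c \<in> I") (auto simp: M'_def intro!: prob_spaceI)
  interpret product_prob_space M' I
    by unfold_locales
  have PiM_eq: "PiM I M' = PiM I M" by (intro PiM_cong) (auto simp: M'_def)
  {
    fix F :: "'i \<Rightarrow> 'x \<Rightarrow> real"
    assume F: "\<And>c. c \<in> I \<Longrightarrow> integrable (M c) (F c)"
    then have F': "\<And>c. c \<in> I \<Longrightarrow> integrable (M' c) (F c)" by (auto simp: M'_def)
    have "integrable (PiM I M) (\<lambda>\<omega>. \<Prod>c\<in>I. F c (\<omega> c))"
      using product_integrable_prod[OF fin F'] PiM_eq by simp
    moreover have "(\<integral>\<omega>. (\<Prod>c\<in>I. F c (\<omega> c)) \<partial>PiM I M) = (\<Prod>c\<in>I. integral\<^sup>L (M' c) (F c))"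
      using product_integral_prod[OF fin F'] PiM_eq by simp
    ultimately have "integrable (PiM I M) (\<lambda>\<omega>. \<Prod>c\<in>I. F c (\<omega> c))"
      "(\<integral>\<omega>. (\<Prod>c\<in>I. F c (\<omega> c)) \<partial>PiM I M) = (\<Prod>c\<in>I. integral\<^sup>L (M c) (F c))"
      by (auto simp: M'_def intro!: prod.cong)
  } note key = this
  show "j \<in> I \<Longrightarrow> integrable (M j) g \<Longrightarrow> integrable (PiM I M) (\<lambda>\<omega>. g (\<omega> j))"
    and "j \<in> I \<Longrightarrow> integrable (M j) g \<Longrightarrow> (\<integral>\<omega>. g (\<omega> j) \<partial>PiM I M) = integral\<^sup>L (M j) g"
  proof -
    assume j: "j \<in> I" and g: "integrable (M j) g"
    define F where "F = (\<lambda>c x. if c = j then g x else (1::real))"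
    have F: "\<And>c. c \<in> I \<Longrightarrow> integrable (M c) (F c)"
      proof -
      fix c assume c: "c \<in> I"
      interpret prob_space "M c" using Pr[OF c] .
      show "integrable (M c) (F c)" using g by (cases "c = j") (auto simp: F_def)
    qed
    have e1: "\<And>\<omega>. (\<Prod>c\<in>I. F c (\<omega> c)) = g (\<omega> j)"
      using prod_one_if[OF fin j, of "\<lambda>c. g (\<omega> c)" for \<omega>] by (simp add: F_def)
    have e2: "(\<Prod>c\<in>I. integral\<^sup>L (M c) (F c)) = integral\<^sup>L (M j) g"
    proof -
      have "(\<Prod>c\<in>I. integral\<^sup>L (M c) (F c)) = (\<Prod>c\<in>I. if c = j then integral\<^sup>L (M c) g else 1)"
        by (intro prod.cong) (auto simp: F_def prob_space.prob_space[OF Pr])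
      also have "\<dots> = integral\<^sup>L (M j) g" by (rule prod_one_if[OF fin j])
      finally show ?thesis .
    qed
    show "integrable (PiM I M) (\<lambda>\<omega>. g (\<omega> j))"
      using key(1)[OF F] by (simp add: e1)
    show "(\<integral>\<omega>. g (\<omega> j) \<partial>PiM I M) = integral\<^sup>L (M j) g"
      using key(2)[OF F] by (simp add: e1 e2)
  qed
  show "j \<in> I \<Longrightarrow> k \<in> I \<Longrightarrow> j \<noteq> k \<Longrightarrow> integrable (M j) g \<Longrightarrow> integrable (M k) h \<Longrightarrow>
        integrable (PiM I M) (\<lambda>\<omega>. g (\<omega> j) * h (\<omega> k))"
    and "j \<in> I \<Longrightarrow> k \<in> I \<Longrightarrow> j \<noteq> k \<Longrightarrow> integrable (M j) g \<Longrightarrow> integrable (M k) h \<Longrightarrow>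
        (\<integral>\<omega>. g (\<omega> j) * h (\<omega> k) \<partial>PiM I M) = integral\<^sup>L (M j) g * integral\<^sup>L (M k) h"
  proof -
    assume j: "j \<in> I" and k: "k \<in> I" and jk: "j \<noteq> k" and g: "integrable (M j) g" and h: "integrable (M k) h"
    define F where "F = (\<lambda>c x. if c = j then g x else if c = k then h x else (1::real))"
    have F: "\<And>c. c \<in> I \<Longrightarrow> integrable (M c) (F c)"
      proof -
      fix c assume c: "c \<in> I"
      interpret prob_space "M c" using Pr[OF c] .
      show "integrable (M c) (F c)" using g h by (cases "c = j"; cases "c = k") (auto simp: F_def)
    qed
    have e1: "\<And>\<omega>. (\<Prod>c\<in>I. F c (\<omega> c)) = g (\<omega> j) * h (\<omega> k)"
      using prod_two_if[OF fin j k jk, of "\<lambda>c. g (\<omega> c)" "\<lambda>c. h (\<omega> c)" for \<omega>] by (simp add: F_def)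
    have e2: "(\<Prod>c\<in>I. integral\<^sup>L (M c) (F c)) = integral\<^sup>L (M j) g * integral\<^sup>L (M k) h"
    proof -
      have "(\<Prod>c\<in>I. integral\<^sup>L (M c) (F c)) = (\<Prod>c\<in>I. if c = j then integral\<^sup>L (M c) g else if c = k then integral\<^sup>L (M c) h else 1)"
        by (intro prod.cong) (auto simp: F_def prob_space.prob_space[OF Pr])
      also have "\<dots> = integral\<^sup>L (M j) g * integral\<^sup>L (M k) h" by (rule prod_two_if[OF fin j k jk])
      finally show ?thesis .
    qed
    show "integrable (PiM I M) (\<lambda>\<omega>. g (\<omega> j) * h (\<omega> k))"
      using key(1)[OF F] by (simp add: e1)
    show "(\<integral>\<omega>. g (\<omega> j) * h (\<omega> k) \<partial>PiM I M) = integral\<^sup>L (M j) g * integral\<^sup>L (M k) h"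
      using key(2)[OF F] by (simp add: e1 e2)
  qed
qed




lemma cs2: "(x \<bullet> y)^2 \<le> norm x ^2 * norm (y::'a::real_inner)^2"
  by (simp add: power2_norm_eq_inner Cauchy_Schwarz_ineq)

lemma norm_add_sq: "norm (x + y)^2 = norm x^2 + 2 * (x \<bullet> y) + norm (y::'a::real_inner)^2"
  by (simp add: power2_norm_eq_inner inner_add inner_commute)

context
  fixes N :: "'x measure" and a :: "'x \<Rightarrow> 'a::euclidean_space"
  assumes N: "prob_space N" and am[measurable]: "a \<in> borel_measurable N"
    and a4: "integrable N (\<lambda>x. norm (a x)^4)" and a0: "integral\<^sup>L N a = 0"
begin

interpretation N: prob_space N by (rule N)

lemma a_int: "integrable N a"
  by (rule integrable_dom[where h="\<lambda>x. 1 + norm (a x)^4"]) (auto intro: pow_le_1_pow4 a4)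

lemma a2_int: "integrable N (\<lambda>x. norm (a x)^2)"
  by (rule integrable_dom[where h="\<lambda>x. 1 + norm (a x)^4"]) (auto intro: pow_le_1_pow4 a4)

lemma a3v_int: "integrable N (\<lambda>x. norm (a x)^2 *\<^sub>R a x)"
proof (rule integrable_dom[where h="\<lambda>x. 1 + norm (a x)^4"])
  show "integrable N (\<lambda>x. 1 + norm (a x)^4)" using a4 by auto
  show "(\<lambda>x. norm (a x)^2 *\<^sub>R a x) \<in> borel_measurable N" by measurable
  fix x show "norm (norm (a x)^2 *\<^sub>R a x) \<le> 1 + norm (a x)^4"
    using pow_le_1_pow4(3)[of "norm (a x)"] by (simp add: power2_eq_square power3_eq_cube)
qed

lemma inner2: "(\<integral>y. norm (s + a y)^2 \<partial>N) = norm s^2 + (\<integral>y. norm (a y)^2 \<partial>N)"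
proof -
  have "(\<integral>y. norm (s + a y)^2 \<partial>N) = (\<integral>y. norm s^2 + 2 * (s \<bullet> a y) + norm (a y)^2 \<partial>N)"
    by (simp add: norm_add_sq)
  also have "\<dots> = norm s^2 + 2 * (\<integral>y. s \<bullet> a y \<partial>N) + (\<integral>y. norm (a y)^2 \<partial>N)"
    using a_int a2_int by (simp add: integral_add N.prob_space)
  also have "(\<integral>y. s \<bullet> a y \<partial>N) = 0" using a_int a0 by simp
  finally show ?thesis by simp
qed

lemma inner4_le: "(\<integral>y. norm (s + a y)^4 \<partial>N) \<le> norm s^4 + 6 * (\<integral>y. norm (a y)^2 \<partial>N) * norm s^2
    + (\<integral>y. norm (a y)^4 \<partial>N) + 4 * (s \<bullet> (\<integral>y. norm (a y)^2 *\<^sub>R a y \<partial>N))"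
proof -
  define B where "B y = norm s^4 + (6 * norm s^2) * norm (a y)^2 + norm (a y)^4
      + (4 * norm s^2) * (s \<bullet> a y) + 4 * (s \<bullet> (norm (a y)^2 *\<^sub>R a y))" for y
  have pt: "norm (s + a y)^4 \<le> B y" for y
  proof -
    have "norm (s + a y)^4 = (norm s^2 + 2 * (s \<bullet> a y) + norm (a y)^2)^2"
      by (simp flip: norm_add_sq power_mult)
    also have "\<dots> = norm s^4 + 4 * (s \<bullet> a y)^2 + norm (a y)^4 + 4 * norm s^2 * (s \<bullet> a y)
       + 2 * norm s^2 * norm (a y)^2 + 4 * (s \<bullet> a y) * norm (a y)^2"
      by (simp add: power2_eq_square power4_eq_xxxx algebra_simps)
    also have "\<dots> \<le> B y"
      using cs2[of s "a y"] by (simp add: B_def algebra_simps)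
    finally show ?thesis .
  qed
  have Bint: "integrable N B"
    unfolding B_def using a_int a2_int a3v_int a4 by (intro Bochner_Integration.integrable_add Bochner_Integration.integrable_mult_right integrable_inner_right) auto
  have "(\<integral>y. norm (s + a y)^4 \<partial>N) \<le> integral\<^sup>L N B"
    by (rule integral_le_nonneg_bound[OF Bint]) (auto intro: pt)
  also have "integral\<^sup>L N B = norm s^4 + (6 * norm s^2) * (\<integral>y. norm (a y)^2 \<partial>N)
    + (\<integral>y. norm (a y)^4 \<partial>N) + (4 * norm s^2) * (\<integral>y. s \<bullet> a y \<partial>N) + 4 * (\<integral>y. s \<bullet> (norm (a y)^2 *\<^sub>R a y) \<partial>N)"
    unfolding B_def using a_int a2_int a3v_int a4
    by (subst Bochner_Integration.integral_add; (intro Bochner_Integration.integrable_add Bochner_Integration.integrable_mult_right integrable_inner_right)?; (simp del: inner_scaleR_right add: N.prob_space)?)+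
  also have "(\<integral>y. s \<bullet> (norm (a y)^2 *\<^sub>R a y) \<partial>N) = s \<bullet> (\<integral>y. norm (a y)^2 *\<^sub>R a y \<partial>N)"
    using a3v_int by (rule integral_inner_right)
  also have "(\<integral>y. s \<bullet> a y \<partial>N) = 0" using a_int a0 by simp
  finally show ?thesis by (simp add: algebra_simps)
qed

lemma S_meas[measurable]: "(\<lambda>\<omega>. \<Sum>t<n. a (\<omega> t)) \<in> borel_measurable (PiM {..<n} (\<lambda>_. N))" for n :: nat
  by measurable

lemma PN: "prob_space (PiM {..<n} (\<lambda>_. N))" for n :: nat
  by (intro prob_space_PiM N)

lemma L1: "integrable (PiM {..<n} (\<lambda>_. N)) (\<lambda>\<omega>. norm (\<Sum>t<n. a (\<omega> t))^4)" for n :: nat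
proof (rule integrable_dom[where h="\<lambda>\<omega>. real n^3 * (\<Sum>t<n. norm (a (\<omega> t))^4)"])
  show "integrable (PiM {..<n} (\<lambda>_. N)) (\<lambda>\<omega>. real n^3 * (\<Sum>t<n. norm (a (\<omega> t))^4))"
    by (intro Bochner_Integration.integrable_mult_right Bochner_Integration.integrable_sum
        marg1_int[where M="\<lambda>_. N" and g="\<lambda>x. norm (a x)^4"] N a4) auto
  show "(\<lambda>\<omega>. norm (\<Sum>t<n. a (\<omega> t))^4) \<in> borel_measurable (PiM {..<n} (\<lambda>_. N))"
    by measurable
  fix \<omega>
  have "norm (norm (\<Sum>t<n. a (\<omega> t))^4) = norm (\<Sum>t<n. a (\<omega> t))^4" by simp
  also have "\<dots> \<le> (\<Sum>t<n. norm (a (\<omega> t)))^4"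
    by (intro power_mono norm_sum) auto
  also have "\<dots> \<le> real (card {..<n})^3 * (\<Sum>t<n. norm (a (\<omega> t))^4)"
    by (rule sum_pow4_le) auto
  finally show "norm (norm (\<Sum>t<n. a (\<omega> t))^4) \<le> real n^3 * (\<Sum>t<n. norm (a (\<omega> t))^4)" by simp
qed

lemma L1b: "integrable (PiM {..<n} (\<lambda>_. N)) (\<lambda>\<omega>. norm (\<Sum>t<n. a (\<omega> t))^2)" for n :: nat
proof (rule integrable_dom[where h="\<lambda>\<omega>. 1 + norm (\<Sum>t<n. a (\<omega> t))^4"])
  interpret P: prob_space "PiM {..<n} (\<lambda>_. N)" by (rule PN)
  show "integrable (PiM {..<n} (\<lambda>_. N)) (\<lambda>\<omega>. 1 + norm (\<Sum>t<n. a (\<omega> t))^4)"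
    using L1 by auto
qed (auto intro: pow_le_1_pow4)

lemma L2_int: "integrable (PiM {..<n} (\<lambda>_. N)) (\<lambda>\<omega>. (\<Sum>t<n. a (\<omega> t)) \<bullet> y)" for n :: nat
  unfolding inner_sum_left
  by (intro Bochner_Integration.integrable_sum marg1_int[where M="\<lambda>_. N" and g="\<lambda>x. a x \<bullet> y"] N) (auto intro: a_int)

lemma L2: "(\<integral>\<omega>. (\<Sum>t<n. a (\<omega> t)) \<bullet> y \<partial>PiM {..<n} (\<lambda>_. N)) = 0" for n :: nat
proof -
  have "(\<integral>\<omega>. (\<Sum>t<n. a (\<omega> t)) \<bullet> y \<partial>PiM {..<n} (\<lambda>_. N)) = (\<Sum>t<n. (\<integral>\<omega>. a (\<omega> t) \<bullet> y \<partial>PiM {..<n} (\<lambda>_. N)))"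
    unfolding inner_sum_left
    by (intro Bochner_Integration.integral_sum marg1_int[where M="\<lambda>_. N" and g="\<lambda>x. a x \<bullet> y"] N) (auto intro: a_int)
  also have "\<dots> = (\<Sum>t<n. (\<integral>x. a x \<bullet> y \<partial>N))"
    by (intro sum.cong refl marg1[where M="\<lambda>_. N" and g="\<lambda>x. a x \<bullet> y"] N) (auto intro: a_int)
  also have "\<dots> = 0" using a_int a0 by simp
  finally show ?thesis .
qed

lemma S_upd: "(\<Sum>t<n. a ((x(n := y)) t)) = (\<Sum>t<n. a (x t))" for n :: nat
  by (intro sum.cong) auto

lemma L3: "(\<integral>\<omega>. norm (\<Sum>t<n. a (\<omega> t))^2 \<partial>PiM {..<n} (\<lambda>_. N)) = real n * (\<integral>x. norm (a x)^2 \<partial>N)" for n :: nat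
proof (induction n)
  case 0
  then show ?case by simp
next
  case (Suc n)
  interpret PS: product_sigma_finite "\<lambda>_::nat. N"
    by (rule product_sigma_finite.intro) (simp add: N prob_space_imp_sigma_finite)
  interpret P: prob_space "PiM {..<n} (\<lambda>_. N)" by (rule PN)
  have "(\<integral>\<omega>. norm (\<Sum>t<Suc n. a (\<omega> t))^2 \<partial>PiM {..<Suc n} (\<lambda>_. N))
      = (\<integral>\<omega>. norm (\<Sum>t<Suc n. a (\<omega> t))^2 \<partial>PiM (insert n {..<n}) (\<lambda>_. N))"
    by (simp add: lessThan_Suc)
  also have "\<dots> = (\<integral>x. (\<integral>y. norm (\<Sum>t<Suc n. a ((x(n:=y)) t))^2 \<partial>N) \<partial>PiM {..<n} (\<lambda>_. N))"
    using L1b[of "Suc n"] by (intro PS.product_integral_insert) (auto simp: lessThan_Suc)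
  also have "\<dots> = (\<integral>x. norm (\<Sum>t<n. a (x t))^2 + (\<integral>y. norm (a y)^2 \<partial>N) \<partial>PiM {..<n} (\<lambda>_. N))"
    by (intro Bochner_Integration.integral_cong refl) (simp add: S_upd inner2)
  also have "\<dots> = real n * (\<integral>x. norm (a x)^2 \<partial>N) + (\<integral>y. norm (a y)^2 \<partial>N)"
    using L1b[of n] Suc.IH by (simp add: Bochner_Integration.integral_add P.prob_space)
  finally show ?case by (simp add: algebra_simps)
qed

lemma L4: "(\<integral>\<omega>. norm (\<Sum>t<n. a (\<omega> t))^4 \<partial>PiM {..<n} (\<lambda>_. N))
   \<le> real n * (\<integral>x. norm (a x)^4 \<partial>N) + 3 * real n * (real n - 1) * (\<integral>x. norm (a x)^2 \<partial>N)^2" for n :: nat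
proof (induction n)
  case 0
  then show ?case by simp
next
  case (Suc n)
  interpret PS: product_sigma_finite "\<lambda>_::nat. N"
    by (rule product_sigma_finite.intro) (simp add: N prob_space_imp_sigma_finite)
  interpret P: prob_space "PiM {..<n} (\<lambda>_. N)" by (rule PN)
  define v where "v = (\<integral>x. norm (a x)^2 \<partial>N)"
  define M4 where "M4 = (\<integral>x. norm (a x)^4 \<partial>N)"
  define \<tau> where "\<tau> = (\<integral>y. norm (a y)^2 *\<^sub>R a y \<partial>N)"
  have v0: "0 \<le> v" unfolding v_def by simp
  have "(\<integral>\<omega>. norm (\<Sum>t<Suc n. a (\<omega> t))^4 \<partial>PiM {..<Suc n} (\<lambda>_. N))
      = (\<integral>\<omega>. norm (\<Sum>t<Suc n. a (\<omega> t))^4 \<partial>PiM (insert n {..<n}) (\<lambda>_. N))"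
    by (simp add: lessThan_Suc)
  also have "\<dots> = (\<integral>x. (\<integral>y. norm (\<Sum>t<Suc n. a ((x(n:=y)) t))^4 \<partial>N) \<partial>PiM {..<n} (\<lambda>_. N))"
    using L1[of "Suc n"] by (intro PS.product_integral_insert) (auto simp: lessThan_Suc)
  also have "\<dots> = (\<integral>x. (\<integral>y. norm ((\<Sum>t<n. a (x t)) + a y)^4 \<partial>N) \<partial>PiM {..<n} (\<lambda>_. N))"
    by (intro Bochner_Integration.integral_cong refl) (simp add: S_upd)
  also have "\<dots> \<le> (\<integral>x. norm (\<Sum>t<n. a (x t))^4 + (6 * v) * norm (\<Sum>t<n. a (x t))^2 + M4
        + 4 * ((\<Sum>t<n. a (x t)) \<bullet> \<tau>) \<partial>PiM {..<n} (\<lambda>_. N))"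
  proof (rule integral_le_nonneg_bound)
    show "integrable (PiM {..<n} (\<lambda>_. N)) (\<lambda>x. norm (\<Sum>t<n. a (x t))^4 + (6 * v) * norm (\<Sum>t<n. a (x t))^2 + M4
        + 4 * ((\<Sum>t<n. a (x t)) \<bullet> \<tau>))"
      using L1[of n] L1b[of n] L2_int[of n \<tau>] by auto
    fix x
    show "0 \<le> (\<integral>y. norm ((\<Sum>t<n. a (x t)) + a y)^4 \<partial>N)" by simp
    show "(\<integral>y. norm ((\<Sum>t<n. a (x t)) + a y)^4 \<partial>N) \<le> norm (\<Sum>t<n. a (x t))^4 + (6 * v) * norm (\<Sum>t<n. a (x t))^2 + M4
        + 4 * ((\<Sum>t<n. a (x t)) \<bullet> \<tau>)"
      using inner4_le[of "\<Sum>t<n. a (x t)"] by (simp add: v_def M4_def \<tau>_def algebra_simps)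
  qed
  also have "\<dots> = (\<integral>x. norm (\<Sum>t<n. a (x t))^4 \<partial>PiM {..<n} (\<lambda>_. N)) + (6 * v) * (real n * v) + M4"
    using L1[of n] L1b[of n] L2_int[of n \<tau>] L2[of n \<tau>] L3[of n] by (simp add: v_def P.prob_space)
  also have "\<dots> \<le> real n * M4 + 3 * real n * (real n - 1) * v^2 + (6 * v) * (real n * v) + M4"
    using Suc.IH by (simp add: v_def M4_def)
  also have "\<dots> = real (Suc n) * M4 + 3 * real (Suc n) * (real (Suc n) - 1) * v^2"
    by (simp add: algebra_simps power2_eq_square)
  finally show ?case by (simp add: v_def M4_def)
qed

lemma Cb_facts:
  fixes m :: nat and y :: 'a
  assumes m: "m \<ge> 1"
  defines "Cb \<equiv> (\<lambda>\<omega>. (1 / real m) *\<^sub>R (\<Sum>t<m. a (\<omega> t)))"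
  defines "v \<equiv> (\<integral>x. norm (a x)^2 \<partial>N)" and "M4 \<equiv> (\<integral>x. norm (a x)^4 \<partial>N)"
  shows "integrable (PiM {..<m} (\<lambda>_. N)) (\<lambda>\<omega>. Cb \<omega> \<bullet> y)"
    and "(\<integral>\<omega>. Cb \<omega> \<bullet> y \<partial>PiM {..<m} (\<lambda>_. N)) = 0"
    and "integrable (PiM {..<m} (\<lambda>_. N)) (\<lambda>\<omega>. norm (Cb \<omega>)^2)"
    and "(\<integral>\<omega>. norm (Cb \<omega>)^2 \<partial>PiM {..<m} (\<lambda>_. N)) = v / m"
    and "integrable (PiM {..<m} (\<lambda>_. N)) (\<lambda>\<omega>. (y \<bullet> Cb \<omega>)^2)"
    and "(\<integral>\<omega>. (y \<bullet> Cb \<omega>)^2 \<partial>PiM {..<m} (\<lambda>_. N)) \<le> norm y^2 * v / m"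
    and "integrable (PiM {..<m} (\<lambda>_. N)) (\<lambda>\<omega>. (norm (Cb \<omega>)^2 - v / m)^2)"
    and "(\<integral>\<omega>. (norm (Cb \<omega>)^2 - v / m)^2 \<partial>PiM {..<m} (\<lambda>_. N)) \<le> (M4 + 2 * (real m - 1) * v^2) / real m^3"
proof -
  interpret P: prob_space "PiM {..<m} (\<lambda>_. N)" by (rule PN)
  let ?P = "PiM {..<m} (\<lambda>_. N)"
  define S where "S \<omega> = (\<Sum>t<m. a (\<omega> t))" for \<omega>
  have mpos: "real m > 0" using m by simp
  have Cb_eq: "Cb \<omega> = (1 / real m) *\<^sub>R S \<omega>" for \<omega> by (simp add: Cb_def S_def)
  have n2: "norm (Cb \<omega>)^2 = norm (S \<omega>)^2 / real m^2" for \<omega>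
    by (simp add: Cb_eq power_divide)
  have S4: "integrable ?P (\<lambda>\<omega>. norm (S \<omega>)^4)" using L1[of m] by (simp add: S_def)
  have S2: "integrable ?P (\<lambda>\<omega>. norm (S \<omega>)^2)" using L1b[of m] by (simp add: S_def)
  have S2i: "(\<integral>\<omega>. norm (S \<omega>)^2 \<partial>?P) = real m * v" using L3[of m] by (simp add: S_def v_def)
  have S4i: "(\<integral>\<omega>. norm (S \<omega>)^4 \<partial>?P) \<le> real m * M4 + 3 * real m * (real m - 1) * v^2"
    using L4[of m] by (simp add: S_def v_def M4_def)
  have Sy: "integrable ?P (\<lambda>\<omega>. S \<omega> \<bullet> y)" "(\<integral>\<omega>. S \<omega> \<bullet> y \<partial>?P) = 0"
    using L2_int[of m y] L2[of m y] by (simp_all add: S_def)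
  have Smeas[measurable]: "S \<in> borel_measurable ?P" unfolding S_def by measurable
  show "integrable ?P (\<lambda>\<omega>. Cb \<omega> \<bullet> y)" using Sy by (simp add: Cb_eq)
  show "(\<integral>\<omega>. Cb \<omega> \<bullet> y \<partial>?P) = 0" using Sy by (simp add: Cb_eq)
  show "integrable ?P (\<lambda>\<omega>. norm (Cb \<omega>)^2)" using S2 by (simp add: n2)
  show "(\<integral>\<omega>. norm (Cb \<omega>)^2 \<partial>?P) = v / m" using mpos by (simp only: n2 integral_divide_zero S2i) (simp add: power2_eq_square)
  have yS: "integrable ?P (\<lambda>\<omega>. (y \<bullet> S \<omega>)^2)"
    by (rule integrable_dom[where h="\<lambda>\<omega>. norm y^2 * norm (S \<omega>)^2"]) (use S2 cs2 in auto)
  have yCb: "(y \<bullet> Cb \<omega>)^2 = (y \<bullet> S \<omega>)^2 / real m^2" for \<omega>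
    by (simp add: Cb_eq power_divide)
  show "integrable ?P (\<lambda>\<omega>. (y \<bullet> Cb \<omega>)^2)" using yS by (simp add: yCb)
  have "(\<integral>\<omega>. (y \<bullet> S \<omega>)^2 \<partial>?P) \<le> (\<integral>\<omega>. norm y^2 * norm (S \<omega>)^2 \<partial>?P)"
    by (rule integral_mono) (use yS S2 cs2 in auto)
  also have "\<dots> = norm y^2 * (real m * v)" using S2i by simp
  finally have "(\<integral>\<omega>. (y \<bullet> S \<omega>)^2 \<partial>?P) \<le> norm y^2 * (real m * v)" .
  then show "(\<integral>\<omega>. (y \<bullet> Cb \<omega>)^2 \<partial>?P) \<le> norm y^2 * v / m"
  proof -
    have "(\<integral>\<omega>. (y \<bullet> Cb \<omega>)^2 \<partial>?P) = (\<integral>\<omega>. (y \<bullet> S \<omega>)^2 \<partial>?P) / real m^2"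
      by (simp only: yCb integral_divide_zero)
    also have "\<dots> \<le> norm y^2 * (real m * v) / real m^2"
      using \<open>(\<integral>\<omega>. (y \<bullet> S \<omega>)^2 \<partial>?P) \<le> norm y^2 * (real m * v)\<close> mpos by (intro divide_right_mono) auto
    also have "\<dots> = norm y^2 * v / m" using mpos by (simp add: power2_eq_square)
    finally show ?thesis .
  qed
  have e4: "(norm (Cb \<omega>)^2 - v / m)^2 = (1 / real m^4) * norm (S \<omega>)^4 + (- 2 * v / real m^3) * norm (S \<omega>)^2 + (v / m)^2" for \<omega>
  proof -
    have "(norm (Cb \<omega>)^2 - v / m)^2 = (norm (S \<omega>)^2 / real m^2 - v / m)^2" by (simp only: n2)
    also have "\<dots> = (1 / real m^4) * norm (S \<omega>)^4 + (- 2 * v / real m^3) * norm (S \<omega>)^2 + (v / m)^2"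
      using mpos by (simp add: power2_eq_square power4_eq_xxxx power3_eq_cube field_simps)
    finally show ?thesis .
  qed
  show "integrable ?P (\<lambda>\<omega>. (norm (Cb \<omega>)^2 - v / m)^2)"
    unfolding e4 using S4 S2 by simp
  have "(\<integral>\<omega>. (norm (Cb \<omega>)^2 - v / m)^2 \<partial>?P) = (1 / real m^4) * (\<integral>\<omega>. norm (S \<omega>)^4 \<partial>?P) + (- 2 * v / real m^3) * (real m * v) + (v / m)^2"
    unfolding e4 using S4 S2 S2i by (simp add: Bochner_Integration.integral_add P.prob_space)
  also have "\<dots> \<le> (1 / real m^4) * (real m * M4 + 3 * real m * (real m - 1) * v^2) + (- 2 * v / real m^3) * (real m * v) + (v / m)^2"
    using S4i mpos by (intro order_refl add_mono mult_left_mono) auto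
  also have "\<dots> = (M4 + (2 * real m - 3) * v^2) / real m^3"
    using mpos by (simp add: field_simps power2_eq_square power3_eq_cube power4_eq_xxxx)
  also have "\<dots> \<le> (M4 + 2 * (real m - 1) * v^2) / real m^3"
    using mpos by (intro divide_right_mono add_left_mono mult_right_mono) auto
  finally show "(\<integral>\<omega>. (norm (Cb \<omega>)^2 - v / m)^2 \<partial>?P) \<le> (M4 + 2 * (real m - 1) * v^2) / real m^3" .
qed

lemma ad_int: "integrable N (\<lambda>x. (a x \<bullet> d)^2)"
  by (rule integrable_dom[where h="\<lambda>x. norm d^2 * norm (a x)^2"])
     (use a2_int cs2 in \<open>auto simp: inner_commute\<close>)

lemma kap_int: "integrable N (\<lambda>x. (a x \<bullet> d) *\<^sub>R a x)"
proof (rule integrable_dom[where h="\<lambda>x. norm d * (1 + norm (a x)^4)"])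
  show "integrable N (\<lambda>x. norm d * (1 + norm (a x)^4))" using a4 by auto
  show "(\<lambda>x. (a x \<bullet> d) *\<^sub>R a x) \<in> borel_measurable N" by measurable
  fix x
  have "norm ((a x \<bullet> d) *\<^sub>R a x) = \<bar>a x \<bullet> d\<bar> * norm (a x)" by simp
  also have "\<dots> \<le> (norm (a x) * norm d) * norm (a x)"
    by (intro mult_right_mono Cauchy_Schwarz_ineq2) auto
  also have "\<dots> = norm d * norm (a x)^2" by (simp add: power2_eq_square)
  also have "\<dots> \<le> norm d * (1 + norm (a x)^4)"
    by (intro mult_left_mono pow_le_1_pow4) auto
  finally show "norm ((a x \<bullet> d) *\<^sub>R a x) \<le> norm d * (1 + norm (a x)^4)" .
qed

lemma query_int: "integrable N (\<lambda>x. (- 2 * (a x \<bullet> w) + Y)^2)"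
proof -
  have e: "(- 2 * (a x \<bullet> w) + Y)^2 = 4 * (a x \<bullet> w)^2 + (- 4 * Y) * (w \<bullet> a x) + Y^2" for x
    by (simp add: power2_eq_square algebra_simps inner_commute)
  show ?thesis unfolding e using ad_int[of w] a_int by simp
qed

lemma query_bound:
  "(\<integral>x. (- 2 * (a x \<bullet> (d + e)) + Y)^2 \<partial>N) \<le> 4 * (\<integral>x. (a x \<bullet> d)^2 \<partial>N)
     + 8 * (e \<bullet> (\<integral>x. (a x \<bullet> d) *\<^sub>R a x \<partial>N)) + 4 * (\<integral>x. norm (a x)^2 \<partial>N) * norm e^2 + Y^2"
proof -
  define B where "B x = 4 * (a x \<bullet> d)^2 + 8 * (e \<bullet> ((a x \<bullet> d) *\<^sub>R a x)) + (4 * norm e^2) * norm (a x)^2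
     + (- 4 * Y) * (d \<bullet> a x) + (- 4 * Y) * (e \<bullet> a x) + Y^2" for x
  have Bint: "integrable N B"
    unfolding B_def using ad_int[of d] kap_int[of d] a2_int a_int
    by (intro Bochner_Integration.integrable_add Bochner_Integration.integrable_mult_right integrable_inner_right) auto
  have "(\<integral>x. (- 2 * (a x \<bullet> (d + e)) + Y)^2 \<partial>N) \<le> integral\<^sup>L N B"
  proof (rule integral_mono[OF query_int Bint])
    fix x
    have "(- 2 * (a x \<bullet> (d + e)) + Y)^2 = 4 * (a x \<bullet> d)^2 + 8 * (e \<bullet> ((a x \<bullet> d) *\<^sub>R a x)) + 4 * (a x \<bullet> e)^2
     + (- 4 * Y) * (d \<bullet> a x) + (- 4 * Y) * (e \<bullet> a x) + Y^2"
      by (simp add: power2_eq_square algebra_simps inner_add_right inner_commute)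
    also have "\<dots> \<le> B x"
      using cs2[of "a x" e] by (simp add: B_def algebra_simps)
    finally show "(- 2 * (a x \<bullet> (d + e)) + Y)^2 \<le> B x" .
  qed
  also have "integral\<^sup>L N B = 4 * (\<integral>x. (a x \<bullet> d)^2 \<partial>N) + 8 * (\<integral>x. e \<bullet> ((a x \<bullet> d) *\<^sub>R a x) \<partial>N)
      + (4 * norm e^2) * (\<integral>x. norm (a x)^2 \<partial>N) + (- 4 * Y) * (\<integral>x. d \<bullet> a x \<partial>N) + (- 4 * Y) * (\<integral>x. e \<bullet> a x \<partial>N) + Y^2"
    unfolding B_def using ad_int[of d] kap_int[of d] a2_int a_int
    by (subst Bochner_Integration.integral_add; (intro Bochner_Integration.integrable_add Bochner_Integration.integrable_mult_right integrable_inner_right)?; (simp del: inner_scaleR_right add: N.prob_space)?)+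
  also have "(\<integral>x. e \<bullet> ((a x \<bullet> d) *\<^sub>R a x) \<partial>N) = e \<bullet> (\<integral>x. (a x \<bullet> d) *\<^sub>R a x \<partial>N)"
    using kap_int[of d] by (rule integral_inner_right)
  also have "(\<integral>x. d \<bullet> a x \<partial>N) = 0" using a_int a0 by simp
  also have "(\<integral>x. e \<bullet> a x \<partial>N) = 0" using a_int a0 by simp
  finally show ?thesis by (simp add: algebra_simps)
qed

end



lemma real_sq_split: "(p + q)^2 \<le> 3/2 * p^2 + 3 * (q::real)^2"
proof -
  have "0 \<le> (p - 2*q)^2" by simp
  moreover have "(p - 2*q)^2 = p^2 - 4*p*q + 4*q^2" "(p + q)^2 = p^2 + 2*p*q + q^2"
    by (simp_all add: power2_eq_square algebra_simps)
  ultimately show ?thesis by linarith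
qed

lemma norm_diff_sq_le: "norm (x - y)^2 \<le> 2 * norm x^2 + 2 * norm (y::'a::real_inner)^2"
proof -
  have "norm (x - y)^2 + norm (x + y)^2 = 2 * norm x^2 + 2 * norm y^2"
    by (simp add: power2_norm_eq_inner inner_add inner_diff inner_commute)
  moreover have "0 \<le> norm (x + y)^2" by simp
  ultimately show ?thesis by linarith
qed

lemma emp_centroid_eq:
  assumes "m \<ge> 1"
  shows "emp_centroid m f s c = mu + (1 / real m) *\<^sub>R (\<Sum>t<m. (f (s c t) - mu))"
proof -
  have "(1 / real m) *\<^sub>R (\<Sum>t<m. (f (s c t) - mu)) = (1 / real m) *\<^sub>R (\<Sum>t<m. f (s c t)) - (1 / real m) *\<^sub>R (real m *\<^sub>R mu)"
    by (simp add: sum_subtractf scaleR_diff_right sum_constant_scaleR)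
  also have "(1 / real m) *\<^sub>R (real m *\<^sub>R mu) = mu" using assms by simp
  finally show ?thesis by (simp add: emp_centroid_def)
qed

lemma key_id:
  fixes al dl cj ci :: "'a::real_inner"
  shows "norm (al - dl - cj)^2 - norm (al - ci)^2 - (norm dl^2 + (r1 - r2)) =
    - 2 * (al \<bullet> (dl + (cj - ci))) + ((norm cj^2 + 2 * (dl \<bullet> cj) - r1) - (norm ci^2 - r2))"
  by (simp add: power2_norm_eq_inner inner_add inner_diff inner_commute algebra_simps)




lemma class_basic:
  fixes D :: "'x measure" and f :: "'x \<Rightarrow> 'a::euclidean_space"
  assumes P: "prob_space D" and fm: "f \<in> borel_measurable D"
    and f4: "integrable D (\<lambda>x. (norm (f x - feat_mean D f))^4)"
  shows "(\<lambda>x. f x - feat_mean D f) \<in> borel_measurable D"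
    and "integral\<^sup>L D (\<lambda>x. f x - feat_mean D f) = 0"
proof -
  interpret prob_space D by (rule P)
  show am: "(\<lambda>x. f x - feat_mean D f) \<in> borel_measurable D" using fm by measurable
  have ai: "integrable D (\<lambda>x. f x - feat_mean D f)"
    by (rule integrable_dom[where h="\<lambda>x. 1 + norm (f x - feat_mean D f)^4"])
       (use f4 am in \<open>auto intro: pow_le_1_pow4\<close>)
  have fi: "integrable D f"
  proof -
    have "integrable D (\<lambda>x. (f x - feat_mean D f) + feat_mean D f)"
      using ai by (intro Bochner_Integration.integrable_add) auto
    then show ?thesis by simp
  qed
  show "integral\<^sup>L D (\<lambda>x. f x - feat_mean D f) = 0"
    using fi by (simp add: Bochner_Integration.integral_diff prob_space feat_mean_def)
qed




lemma lin_aux: "(x::real) + y \<le> z \<Longrightarrow> 0 \<le> x \<Longrightarrow> 0 \<le> p \<Longrightarrow> 3 * (q + 2 * y) + (p + 2 * x) \<le> 3 * (p + q + 2 * z)"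
  by (simp add: algebra_simps)

lemma H_alg:
  fixes NE N1 N2 wq t1 t2 W Z EK P1 P2 Q :: real
  assumes "NE \<le> 2*N1 + 2*N2" "0 \<le> wq" "t1^2 \<le> 6*W + 3*Z" "EK = P1 - P2"
  shows "4*Q + 8*EK + 4*wq*NE + (t1 - t2)^2 \<le> 4*Q + (8*P1 + (8*wq)*N1 + 6*W + 3*Z) + ((-8)*P2 + (8*wq)*N2 + t2^2) + (-2)*(t1*t2)"
proof -
  have a: "wq*NE \<le> wq*(2*N1 + 2*N2)" using assms(1,2) by (rule mult_left_mono)
  have b: "(t1 - t2)^2 = t1^2 - 2*(t1*t2) + t2^2" by (simp add: power2_eq_square algebra_simps)
  have c: "wq*(2*N1 + 2*N2) = 2*(wq*N1) + 2*(wq*N2)" by (simp add: algebra_simps)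
  have d: "4*wq*NE = 4*(wq*NE)" "(8*wq)*N1 = 8*(wq*N1)" "(8*wq)*N2 = 8*(wq*N2)" by simp_all
  show ?thesis unfolding b d using a c assms(3,4) by linarith
qed
lemma pair_bound:
  fixes C m :: nat and D :: "nat \<Rightarrow> 'x measure" and f :: "'x \<Rightarrow> 'a::euclidean_space" and i j :: nat
  assumes m: "m \<ge> 1" and ij: "i < C" "j < C" "i \<noteq> j"
    and P: "\<And>c. c < C \<Longrightarrow> prob_space (D c)"
    and fm: "\<And>c. c < C \<Longrightarrow> f \<in> borel_measurable (D c)"
    and f4: "\<And>c. c < C \<Longrightarrow> integrable (D c) (\<lambda>x. (norm (f x - feat_mean (D c) f))^4)"
    and mupos: "(norm (feat_mean (D j) f - feat_mean (D i) f))^2 + (feat_tvar (D j) f - feat_tvar (D i) f) / real m > 0"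
  defines "SM \<equiv> support_measure C m D"
  defines "A \<equiv> {\<omega> \<in> space (SM \<Otimes>\<^sub>M D i). norm (f (snd \<omega>) - emp_centroid m f (fst \<omega>) j)^2 \<le> norm (f (snd \<omega>) - emp_centroid m f (fst \<omega>) i)^2}"
  shows "A \<in> sets (SM \<Otimes>\<^sub>M D i)"
    and "measure (SM \<Otimes>\<^sub>M D i) A \<le>
      (4 * (\<integral>x. ((f x - feat_mean (D i) f) \<bullet> (feat_mean (D j) f - feat_mean (D i) f))^2 \<partial>D i)
       + 12 * (feat_tvar (D i) f + feat_tvar (D j) f)^2 / real m
       + 6 * (norm (feat_mean (D j) f - feat_mean (D i) f))^2 * (feat_tvar (D i) f + feat_tvar (D j) f) / real m
       + 3 / real m^3 * (feat_M4 (D i) f + feat_M4 (D j) f + 2 * (real m - 1) * (feat_tvar (D i) f + feat_tvar (D j) f)^2))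
      / ((norm (feat_mean (D j) f - feat_mean (D i) f))^2 + (feat_tvar (D j) f - feat_tvar (D i) f) / real m)^2"
proof -
  define \<mu> where "\<mu> c = feat_mean (D c) f" for c
  define v where "v c = feat_tvar (D c) f" for c
  define M4 where "M4 c = feat_M4 (D c) f" for c
  define \<delta> where "\<delta> = \<mu> j - \<mu> i"
  define mu where "mu = norm \<delta>^2 + (v j - v i) / real m"
  define Qd where "Qd = (\<integral>x. ((f x - \<mu> i) \<bullet> \<delta>)^2 \<partial>D i)"
  define \<kappa> where "\<kappa> = (\<integral>x. ((f x - \<mu> i) \<bullet> \<delta>) *\<^sub>R (f x - \<mu> i) \<partial>D i)"
  define Cb where "Cb c y = (1 / real m) *\<^sub>R (\<Sum>t<m. (f (y t) - \<mu> c))" for c y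
  define Nb where "Nb = 4 * Qd + 12 * (v i + v j)^2 / real m + 6 * norm \<delta>^2 * (v i + v j) / real m
       + 3 / real m^3 * (M4 i + M4 j + 2 * (real m - 1) * (v i + v j)^2)"
  have mu0: "mu > 0" using mupos by (simp add: mu_def \<delta>_def \<mu>_def v_def)
  let ?PS = "SM \<Otimes>\<^sub>M D i"
  define MC where "MC = (\<lambda>c. PiM {..<m} (\<lambda>s. D c))"
  have SM_eq: "SM = PiM {..<C} MC" by (simp add: SM_def support_measure_def MC_def)
  have PrC: "\<And>c. c \<in> {..<C} \<Longrightarrow> prob_space (MC c)"
    unfolding MC_def by (intro prob_space_PiM) (auto intro: P)
  interpret SMp: prob_space SM unfolding SM_eq by (intro prob_space_PiM PrC)
  interpret Di: prob_space "D i" using P ij by auto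
  interpret PSp: prob_space ?PS by (intro prob_space_pair SMp.prob_space_axioms Di.prob_space_axioms)
  have mf: "(\<lambda>\<omega>. f (fst \<omega> c t)) \<in> borel_measurable ?PS" if c: "c < C" and t: "t < m" for c t
  proof -
    have 1: "fst \<in> measurable ?PS SM" by (rule measurable_fst)
    have 2: "(\<lambda>s. s c) \<in> measurable SM (MC c)"
      unfolding SM_eq using measurable_component_singleton[of c "{..<C}" MC] c by simp
    have 3: "(\<lambda>y. y t) \<in> measurable (MC c) (D c)"
      unfolding MC_def using measurable_component_singleton[of t "{..<m}" "\<lambda>s. D c"] t by simp
    have "(\<lambda>\<omega>. f (fst \<omega> c t)) = f \<circ> (\<lambda>y. y t) \<circ> (\<lambda>s. s c) \<circ> fst" by (simp add: comp_def)
    also have "\<dots> \<in> borel_measurable ?PS"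
      by (intro measurable_comp[OF 1] measurable_comp[OF 2] measurable_comp[OF 3] fm c)
    finally show ?thesis .
  qed
  have mz: "(\<lambda>\<omega>. f (snd \<omega>)) \<in> borel_measurable ?PS"
    by (intro measurable_compose[OF measurable_snd] fm ij)
  have mc: "(\<lambda>\<omega>. emp_centroid m f (fst \<omega>) c) \<in> borel_measurable ?PS" if c: "c < C" for c
    unfolding emp_centroid_def using mf[OF c]
    by (intro borel_measurable_scaleR borel_measurable_const borel_measurable_sum) simp_all
  define X where "X \<omega> = norm (f (snd \<omega>) - emp_centroid m f (fst \<omega>) j)^2 - norm (f (snd \<omega>) - emp_centroid m f (fst \<omega>) i)^2" for \<omega>
  have mX[measurable]: "X \<in> borel_measurable ?PS"
    unfolding X_def using mz mc[OF ij(1)] mc[OF ij(2)]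
    by (intro borel_measurable_diff borel_measurable_power borel_measurable_norm) auto
  have A_eq: "A = {\<omega> \<in> space ?PS. X \<omega> \<le> 0}" by (auto simp: A_def X_def)
  show Asets: "A \<in> sets ?PS" unfolding A_eq by measurable
  have Pc: "prob_space (D c)" and amc: "(\<lambda>x. f x - \<mu> c) \<in> borel_measurable (D c)"
    and a0c: "integral\<^sup>L (D c) (\<lambda>x. f x - \<mu> c) = 0"
    and f4c: "integrable (D c) (\<lambda>x. norm (f x - \<mu> c)^4)" if "c < C" for c
    using P[OF that] class_basic[OF P[OF that] fm[OF that] f4[OF that]] f4[OF that] by (simp_all add: \<mu>_def)
  have v_eq: "(\<integral>x. norm (f x - \<mu> c)^2 \<partial>D c) = v c" for c by (simp add: v_def feat_tvar_def \<mu>_def)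
  have M4_eq: "(\<integral>x. norm (f x - \<mu> c)^4 \<partial>D c) = M4 c" for c by (simp add: M4_def feat_M4_def \<mu>_def)
  have Cb_eq: "(1 / real m) *\<^sub>R (\<Sum>t<m. f (\<omega> t) - \<mu> c) = Cb c \<omega>" for c \<omega> by (simp add: Cb_def)
  have CF: "integrable (MC c) (\<lambda>\<omega>. Cb c \<omega> \<bullet> y)"
      "(\<integral>\<omega>. Cb c \<omega> \<bullet> y \<partial>MC c) = 0"
      "integrable (MC c) (\<lambda>\<omega>. norm (Cb c \<omega>)^2)"
      "(\<integral>\<omega>. norm (Cb c \<omega>)^2 \<partial>MC c) = v c / m"
      "integrable (MC c) (\<lambda>\<omega>. (y \<bullet> Cb c \<omega>)^2)"
      "(\<integral>\<omega>. (y \<bullet> Cb c \<omega>)^2 \<partial>MC c) \<le> norm y^2 * v c / m"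
      "integrable (MC c) (\<lambda>\<omega>. (norm (Cb c \<omega>)^2 - v c / m)^2)"
      "(\<integral>\<omega>. (norm (Cb c \<omega>)^2 - v c / m)^2 \<partial>MC c) \<le> (M4 c + 2 * (real m - 1) * (v c)^2) / real m^3"
    if c: "c < C" for c y
    using Cb_facts(1,2,5,6)[OF Pc[OF c] amc[OF c] f4c[OF c] a0c[OF c] m, where y=y, unfolded Cb_eq v_eq M4_eq]
      Cb_facts(3,4,7,8)[OF Pc[OF c] amc[OF c] f4c[OF c] a0c[OF c] m, unfolded Cb_eq v_eq M4_eq]
    unfolding MC_def by auto
  have vnn: "0 \<le> v c" for c unfolding v_def feat_tvar_def by simp
  have M4nn: "0 \<le> M4 c" for c unfolding M4_def feat_M4_def by simp
  have Qdnn: "0 \<le> Qd" unfolding Qd_def by simp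
  have mpos: "real m > 0" using m by simp
  define Gj where "Gj y = 8 * (Cb j y \<bullet> \<kappa>) + (8 * v i) * norm (Cb j y)^2 + 6 * (\<delta> \<bullet> Cb j y)^2 + 3 * (norm (Cb j y)^2 - v j / m)^2" for y
  define Gi where "Gi y = (- 8) * (Cb i y \<bullet> \<kappa>) + (8 * v i) * norm (Cb i y)^2 + (norm (Cb i y)^2 - v i / m)^2" for y
  define T1 where "T1 y = norm (Cb j y)^2 + 2 * (Cb j y \<bullet> \<delta>) - v j / m" for y
  define T2 where "T2 y = norm (Cb i y)^2 - v i / m" for y
  define H where "H s = 4 * Qd + Gj (s j) + Gi (s i) + (- 2) * (T1 (s j) * T2 (s i))" for s
  interpret MCj: prob_space "MC j" using PrC ij by auto
  interpret MCi: prob_space "MC i" using PrC ij by auto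
  have Gj_int: "integrable (MC j) Gj" unfolding Gj_def using CF[OF ij(2)] by auto
  have Gi_int: "integrable (MC i) Gi" unfolding Gi_def using CF[OF ij(1)] by auto
  have T1_int: "integrable (MC j) T1" unfolding T1_def using CF[OF ij(2)] by auto
  have T2_int: "integrable (MC i) T2" unfolding T2_def using CF[OF ij(1)] by auto
  have finC: "finite {..<C}" by simp
  have H_int: "integrable SM H"
    unfolding H_def
    using marg1_int[where M=MC and I="{..<C}", OF PrC finC, where j=j and g=Gj] marg1_int[where M=MC and I="{..<C}", OF PrC finC, where j=i and g=Gi]
      marg2_int[where M=MC and I="{..<C}", OF PrC finC, where j=j and k=i and g=T1 and h=T2] ij Gj_int Gi_int T1_int T2_int by (auto simp: SM_eq[symmetric])
  have H_intg: "integral\<^sup>L SM H = 4 * Qd + integral\<^sup>L (MC j) Gj + integral\<^sup>L (MC i) Gi + (- 2) * (integral\<^sup>L (MC j) T1 * integral\<^sup>L (MC i) T2)"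
    unfolding H_def
    using marg1_int[where M=MC and I="{..<C}", OF PrC finC, where j=j and g=Gj] marg1_int[where M=MC and I="{..<C}", OF PrC finC, where j=i and g=Gi]
      marg2_int[where M=MC and I="{..<C}", OF PrC finC, where j=j and k=i and g=T1 and h=T2] ij Gj_int Gi_int T1_int T2_int
      marg1[where M=MC and I="{..<C}", OF PrC finC, where j=j and g=Gj] marg1[where M=MC and I="{..<C}", OF PrC finC, where j=i and g=Gi] marg2[where M=MC and I="{..<C}", OF PrC finC, where j=j and k=i and g=T1 and h=T2]
    by (simp add: Bochner_Integration.integral_add SMp.prob_space SM_eq[symmetric])
  have T2_0: "integral\<^sup>L (MC i) T2 = 0"
    using CF[OF ij(1)] mpos prob_space.prob_space[OF PrC[of i]] ij unfolding T2_def
    by (simp add: Bochner_Integration.integral_diff)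
  have Gj_le: "integral\<^sup>L (MC j) Gj \<le> 8 * v i * (v j / m) + 6 * (norm \<delta>^2 * v j / m) + 3 * ((M4 j + 2 * (real m - 1) * (v j)^2) / real m^3)"
  proof -
    have "integral\<^sup>L (MC j) Gj = 8 * (\<integral>y. Cb j y \<bullet> \<kappa> \<partial>MC j) + (8 * v i) * (\<integral>y. norm (Cb j y)^2 \<partial>MC j)
       + 6 * (\<integral>y. (\<delta> \<bullet> Cb j y)^2 \<partial>MC j) + 3 * (\<integral>y. (norm (Cb j y)^2 - v j / m)^2 \<partial>MC j)"
      unfolding Gj_def using CF[OF ij(2)] by (simp add: Bochner_Integration.integral_add)
    also have "\<dots> = (8 * v i) * (v j / m) + 6 * (\<integral>y. (\<delta> \<bullet> Cb j y)^2 \<partial>MC j) + 3 * (\<integral>y. (norm (Cb j y)^2 - v j / m)^2 \<partial>MC j)"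
      by (simp add: CF(2)[OF ij(2)] CF(4)[OF ij(2)])
    finally show ?thesis using CF(6)[OF ij(2), of \<delta>] CF(8)[OF ij(2)] by linarith
  qed
  have Gi_le: "integral\<^sup>L (MC i) Gi \<le> 8 * v i * (v i / m) + (M4 i + 2 * (real m - 1) * (v i)^2) / real m^3"
  proof -
    have "integral\<^sup>L (MC i) Gi = (- 8) * (\<integral>y. Cb i y \<bullet> \<kappa> \<partial>MC i) + (8 * v i) * (\<integral>y. norm (Cb i y)^2 \<partial>MC i)
       + (\<integral>y. (norm (Cb i y)^2 - v i / m)^2 \<partial>MC i)"
      unfolding Gi_def using CF[OF ij(1)] by (simp add: Bochner_Integration.integral_add)
    also have "\<dots> = (8 * v i) * (v i / m) + (\<integral>y. (norm (Cb i y)^2 - v i / m)^2 \<partial>MC i)"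
      by (simp add: CF(2)[OF ij(1)] CF(4)[OF ij(1)])
    finally show ?thesis using CF(8)[OF ij(1)] by linarith
  qed
  have H_le: "integral\<^sup>L SM H \<le> Nb"
  proof -
    have "integral\<^sup>L SM H \<le> 4 * Qd + (8 * v i * (v j / m) + 6 * (norm \<delta>^2 * v j / m) + 3 * ((M4 j + 2 * (real m - 1) * (v j)^2) / real m^3))
       + (8 * v i * (v i / m) + (M4 i + 2 * (real m - 1) * (v i)^2) / real m^3)"
      using H_intg T2_0 Gj_le Gi_le by simp
    also have "\<dots> \<le> Nb"
    proof -
      have wq: "v i \<ge> 0" "v j \<ge> 0" "M4 i \<ge> 0" "M4 j \<ge> 0" "real m - 1 \<ge> 0" using vnn M4nn m by auto
      have a1: "8 * v i * (v j / m) + 8 * v i * (v i / m) \<le> 12 * (v i + v j)^2 / real m"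
      proof -
        have "8 * v i * v j + 8 * v i * v i \<le> 12 * (v i + v j)^2"
          using wq by (simp add: power2_eq_square algebra_simps mult_nonneg_nonneg)
        then have "(8 * v i * v j + 8 * v i * v i) / real m \<le> 12 * (v i + v j)^2 / real m"
          using mpos by (intro divide_right_mono) auto
        moreover have "8 * v i * (v j / m) + 8 * v i * (v i / m) = (8 * v i * v j + 8 * v i * v i) / real m"
          by (simp add: add_divide_distrib)
        ultimately show ?thesis by simp
      qed
      have a2: "6 * (norm \<delta>^2 * v j / m) \<le> 6 * norm \<delta>^2 * (v i + v j) / real m"
        using wq mpos by (simp add: divide_simps algebra_simps mult_nonneg_nonneg)
      have a3: "3 * ((M4 j + 2 * (real m - 1) * (v j)^2) / real m^3) + (M4 i + 2 * (real m - 1) * (v i)^2) / real m^3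
          \<le> 3 / real m^3 * (M4 i + M4 j + 2 * (real m - 1) * (v i + v j)^2)"
      proof -
        define k where "k = real m - 1"
        have k0: "k \<ge> 0" using wq by (simp add: k_def)
        have f1: "k * (v i)^2 + k * (v j)^2 \<le> k * (v i + v j)^2"
        proof -
          have "(v i)^2 + (v j)^2 \<le> (v i + v j)^2" using wq by (simp add: power2_eq_square algebra_simps)
          then have "k * ((v i)^2 + (v j)^2) \<le> k * (v i + v j)^2" using k0 by (rule mult_left_mono)
          then show ?thesis by (simp add: algebra_simps)
        qed
        have f2: "k * (v i)^2 \<ge> 0" using k0 by simp
        have "3 * (M4 j + 2 * (real m - 1) * (v j)^2) + (M4 i + 2 * (real m - 1) * (v i)^2)
            \<le> 3 * (M4 i + M4 j + 2 * (real m - 1) * (v i + v j)^2)"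
          unfolding mult.assoc k_def[symmetric] by (rule lin_aux[OF f1 f2 wq(3)])
        then show ?thesis using mpos by (simp add: divide_simps)
      qed
      show ?thesis unfolding Nb_def using a1 a2 a3 by linarith
    qed
    finally show ?thesis .
  qed
  have inner: "(\<integral>\<^sup>+x. ennreal ((X (s, x) - mu)^2 / mu^2) \<partial>D i) \<le> ennreal (H s / mu^2) \<and> 0 \<le> H s" for s
  proof -
    define e where "e = Cb j (s j) - Cb i (s i)"
    define Yv where "Yv = T1 (s j) - T2 (s i)"
    have ec: "emp_centroid m f s c = \<mu> c + Cb c (s c)" for c
      using emp_centroid_eq[OF m, of f s c "\<mu> c"] by (simp add: Cb_def)
    have Xid: "X (s, x) - mu = - 2 * ((f x - \<mu> i) \<bullet> (\<delta> + e)) + Yv" for x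
    proof -
      have 1: "f x - emp_centroid m f s j = (f x - \<mu> i) - \<delta> - Cb j (s j)"
        by (simp add: ec \<delta>_def algebra_simps)
      have 2: "f x - emp_centroid m f s i = (f x - \<mu> i) - Cb i (s i)"
        by (simp add: ec algebra_simps)
      have 3: "mu = norm \<delta>^2 + (v j / real m - v i / real m)"
        by (simp add: mu_def diff_divide_distrib)
      show ?thesis
        unfolding X_def fst_conv snd_conv 1 2 3 key_id e_def Yv_def T1_def T2_def
        by (simp add: inner_commute)
    qed
    have QI: "integrable (D i) (\<lambda>x. (- 2 * ((f x - \<mu> i) \<bullet> (\<delta> + e)) + Yv)^2)"
      using query_int[OF Pc[OF ij(1)] amc[OF ij(1)] f4c[OF ij(1)] a0c[OF ij(1)]] by simp
    have QB: "(\<integral>x. (- 2 * ((f x - \<mu> i) \<bullet> (\<delta> + e)) + Yv)^2 \<partial>D i) \<le> 4 * Qd + 8 * (e \<bullet> \<kappa>) + 4 * v i * norm e^2 + Yv^2"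
      using query_bound[OF Pc[OF ij(1)] amc[OF ij(1)] f4c[OF ij(1)] a0c[OF ij(1)], of \<delta> e Yv]
      unfolding Qd_def \<kappa>_def v_eq by simp
    have HB: "4 * Qd + 8 * (e \<bullet> \<kappa>) + 4 * v i * norm e^2 + Yv^2 \<le> H s"
    proof -
      have "4 * Qd + 8 * (e \<bullet> \<kappa>) + 4 * v i * norm e^2 + (T1 (s j) - T2 (s i))^2
         \<le> 4 * Qd + (8 * (Cb j (s j) \<bullet> \<kappa>) + (8 * v i) * norm (Cb j (s j))^2 + 6 * (\<delta> \<bullet> Cb j (s j))^2 + 3 * (norm (Cb j (s j))^2 - v j / m)^2)
           + ((- 8) * (Cb i (s i) \<bullet> \<kappa>) + (8 * v i) * norm (Cb i (s i))^2 + (T2 (s i))^2) + (- 2) * (T1 (s j) * T2 (s i))"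
      proof (rule H_alg)
        show "norm e^2 \<le> 2 * norm (Cb j (s j))^2 + 2 * norm (Cb i (s i))^2" unfolding e_def by (rule norm_diff_sq_le)
        show "0 \<le> v i" by (rule vnn)
        show "e \<bullet> \<kappa> = Cb j (s j) \<bullet> \<kappa> - Cb i (s i) \<bullet> \<kappa>" unfolding e_def by (simp add: inner_diff_left)
        have "(T1 (s j))^2 = (2 * (Cb j (s j) \<bullet> \<delta>) + (norm (Cb j (s j))^2 - v j / m))^2" by (simp add: T1_def algebra_simps)
        also have "\<dots> \<le> 3/2 * (2 * (Cb j (s j) \<bullet> \<delta>))^2 + 3 * (norm (Cb j (s j))^2 - v j / m)^2" by (rule real_sq_split)
        also have "\<dots> = 6 * (\<delta> \<bullet> Cb j (s j))^2 + 3 * (norm (Cb j (s j))^2 - v j / m)^2"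
          by (simp add: power2_eq_square inner_commute)
        finally show "(T1 (s j))^2 \<le> 6 * (\<delta> \<bullet> Cb j (s j))^2 + 3 * (norm (Cb j (s j))^2 - v j / m)^2" .
      qed
      then show ?thesis by (simp add: H_def Gj_def Gi_def Yv_def T2_def)
    qed
    have "(\<integral>\<^sup>+x. ennreal ((X (s, x) - mu)^2 / mu^2) \<partial>D i) = (\<integral>\<^sup>+x. ennreal ((- 2 * ((f x - \<mu> i) \<bullet> (\<delta> + e)) + Yv)^2 / mu^2) \<partial>D i)"
      by (simp add: Xid)
    also have "\<dots> = ennreal (\<integral>x. (- 2 * ((f x - \<mu> i) \<bullet> (\<delta> + e)) + Yv)^2 / mu^2 \<partial>D i)"
      using QI by (intro nn_integral_eq_integral) auto
    also have "\<dots> = ennreal ((\<integral>x. (- 2 * ((f x - \<mu> i) \<bullet> (\<delta> + e)) + Yv)^2 \<partial>D i) / mu^2)" by simp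
    also have "\<dots> \<le> ennreal (H s / mu^2)"
      using QB HB mu0 by (intro ennreal_leI divide_right_mono) auto
    finally have fin: "(\<integral>\<^sup>+x. ennreal ((X (s, x) - mu)^2 / mu^2) \<partial>D i) \<le> ennreal (H s / mu^2)" .
    have nn: "0 \<le> (\<integral>x. (- 2 * ((f x - \<mu> i) \<bullet> (\<delta> + e)) + Yv)^2 \<partial>D i)"
      by (intro Bochner_Integration.integral_nonneg) auto
    have "0 \<le> H s" using QB HB nn by linarith
    then show ?thesis using fin by simp
  qed
  \<comment> \<open>Chebyshev\<close>
  have ind: "indicator A \<omega> \<le> ennreal ((X \<omega> - mu)^2 / mu^2)" if "\<omega> \<in> space ?PS" for \<omega>
  proof (cases "\<omega> \<in> A")
    case True
    then have "X \<omega> \<le> 0" by (simp add: A_eq)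
    then have "mu^2 \<le> (mu - X \<omega>)^2" using mu0 by (intro power_mono) auto
    then have "mu^2 \<le> (X \<omega> - mu)^2" by (simp add: power2_commute)
    then have "1 \<le> (X \<omega> - mu)^2 / mu^2" using mu0 by simp
    then show ?thesis using True by simp
  qed simp
  have "emeasure ?PS A = (\<integral>\<^sup>+\<omega>. indicator A \<omega> \<partial>?PS)" using Asets by simp
  also have "\<dots> \<le> (\<integral>\<^sup>+\<omega>. ennreal ((X \<omega> - mu)^2 / mu^2) \<partial>?PS)"
    by (intro nn_integral_mono ind)
  also have "\<dots> = (\<integral>\<^sup>+s. (\<integral>\<^sup>+x. ennreal ((X (s, x) - mu)^2 / mu^2) \<partial>D i) \<partial>SM)"
    by (rule Di.nn_integral_fst[symmetric]) measurable
  also have "\<dots> \<le> (\<integral>\<^sup>+s. ennreal (H s / mu^2) \<partial>SM)"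
    by (intro nn_integral_mono) (use inner in blast)
  also have "\<dots> = ennreal (\<integral>s. H s / mu^2 \<partial>SM)"
    using H_int inner by (intro nn_integral_eq_integral) (auto intro!: divide_nonneg_nonneg)
  also have "\<dots> = ennreal (integral\<^sup>L SM H / mu^2)" by simp
  also have "\<dots> \<le> ennreal (Nb / mu^2)"
    using H_le mu0 by (intro ennreal_leI divide_right_mono) auto
  finally have "ennreal (measure ?PS A) \<le> ennreal (Nb / mu^2)" by (simp add: PSp.emeasure_eq_measure)
  moreover have "0 \<le> Nb"
    unfolding Nb_def using Qdnn vnn[of i] vnn[of j] M4nn[of i] M4nn[of j] m mpos
    by (intro add_nonneg_nonneg mult_nonneg_nonneg divide_nonneg_nonneg) auto
  ultimately have "measure ?PS A \<le> Nb / mu^2" by (simp add: ennreal_le_iff)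
  then show "measure ?PS A \<le>
      (4 * (\<integral>x. ((f x - feat_mean (D i) f) \<bullet> (feat_mean (D j) f - feat_mean (D i) f))^2 \<partial>D i)
       + 12 * (feat_tvar (D i) f + feat_tvar (D j) f)^2 / real m
       + 6 * (norm (feat_mean (D j) f - feat_mean (D i) f))^2 * (feat_tvar (D i) f + feat_tvar (D j) f) / real m
       + 3 / real m^3 * (feat_M4 (D i) f + feat_M4 (D j) f + 2 * (real m - 1) * (feat_tvar (D i) f + feat_tvar (D j) f)^2))
      / ((norm (feat_mean (D j) f - feat_mean (D i) f))^2 + (feat_tvar (D j) f - feat_tvar (D i) f) / real m)^2"
    unfolding Nb_def mu_def Qd_def \<delta>_def \<mu>_def v_def M4_def .
qed




lemma alg_final:
  fixes d m vi vj M4i M4j Qd :: real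
  assumes d: "d > 0" and m: "m > 0" and mu: "d^2 + (vj - vi) / m > 0"
  shows "(4 * (Qd / d^2 / d^2) + 12 / m * ((vi + vj) / d^2)^2 + 6 / m * ((vi + vj) / d^2)) / (1 + (vj - vi) / (m * d^2))^2
    + (3 / m^3 * ((M4i + M4j) / d^4 + 2 * (m - 1) * ((vi + vj) / d^2)^2)) / (1 + (vj - vi) / (m * d^2))^2
    = (4 * Qd + 12 * (vi + vj)^2 / m + 6 * d^2 * (vi + vj) / m + 3 / m^3 * (M4i + M4j + 2 * (m - 1) * (vi + vj)^2))
      / (d^2 + (vj - vi) / m)^2"
proof -
  have den: "(1 + (vj - vi) / (m * d^2))^2 = (d^2 + (vj - vi) / m)^2 / d^4"
    using d m by (simp add: field_simps power2_eq_square power4_eq_xxxx)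
  have "(4 * (Qd / d^2 / d^2) + 12 / m * ((vi + vj) / d^2)^2 + 6 / m * ((vi + vj) / d^2))
    + (3 / m^3 * ((M4i + M4j) / d^4 + 2 * (m - 1) * ((vi + vj) / d^2)^2))
    = (4 * Qd + 12 * (vi + vj)^2 / m + 6 * d^2 * (vi + vj) / m + 3 / m^3 * (M4i + M4j + 2 * (m - 1) * (vi + vj)^2)) / d^4"
    using d m by (simp add: field_simps power2_eq_square power4_eq_xxxx)
  then show ?thesis
    using d m mu unfolding den add_divide_distrib[symmetric]
    by (simp add: field_simps)
qed

theorem theorem2:
  fixes C m :: nat and D :: "nat \<Rightarrow> 'x measure" and f :: "'x \<Rightarrow> 'a::euclidean_space"
    and tb :: "nat set \<Rightarrow> nat"
  assumes "C \<ge> 2" and "m \<ge> 1"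
    and "tie_rule tb"
    and "\<And>c. c < C \<Longrightarrow> prob_space (D c)"
    and "\<And>c. c < C \<Longrightarrow> f \<in> borel_measurable (D c)"
    and "\<And>c. c < C \<Longrightarrow> integrable (D c) (\<lambda>x. (norm (f x - feat_mean (D c) f))^4)"
    and "\<And>i j. i < C \<Longrightarrow> j < C \<Longrightarrow> i \<noteq> j \<Longrightarrow> feat_mean (D i) f \<noteq> feat_mean (D j) f"
    and "\<And>i j. i < C \<Longrightarrow> j < C \<Longrightarrow> i \<noteq> j \<Longrightarrow>
           (norm (feat_mean (D j) f - feat_mean (D i) f))^2
             + (feat_tvar (D j) f - feat_tvar (D i) f) / real m > 0"
  shows "ncc_err tb C m D f \<le>
    (1 / real C) * (\<Sum>i<C. \<Sum>j\<in>{..<C} - {i}.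
       (let d = norm (feat_mean (D j) f - feat_mean (D i) f);
            u = (1 / d) *\<^sub>R (feat_mean (D j) f - feat_mean (D i) f);
            Vt = feat_dirvar (D i) f u / d^2;
            V = (feat_tvar (D i) f + feat_tvar (D j) f) / d^2;
            den = (1 + (feat_tvar (D j) f - feat_tvar (D i) f) / (real m * d^2))^2
        in (4 * Vt + 12 / real m * V^2 + 6 / real m * V) / den))
  + (1 / real C) * (\<Sum>i<C. \<Sum>j\<in>{..<C} - {i}.
       (let d = norm (feat_mean (D j) f - feat_mean (D i) f);
            V = (feat_tvar (D i) f + feat_tvar (D j) f) / d^2;
            \<Theta> = (feat_M4 (D i) f + feat_M4 (D j) f) / d^4;
            den = (1 + (feat_tvar (D j) f - feat_tvar (D i) f) / (real m * d^2))^2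
        in (3 / real m^3 * (\<Theta> + 2 * (real m - 1) * V^2)) / den))"
proof -
  let ?SM = "support_measure C m D"
  define \<mu> where "\<mu> c = feat_mean (D c) f" for c
  define L1 where "L1 i j = (let d = norm (feat_mean (D j) f - feat_mean (D i) f);
            u = (1 / d) *\<^sub>R (feat_mean (D j) f - feat_mean (D i) f);
            Vt = feat_dirvar (D i) f u / d^2;
            V = (feat_tvar (D i) f + feat_tvar (D j) f) / d^2;
            den = (1 + (feat_tvar (D j) f - feat_tvar (D i) f) / (real m * d^2))^2
        in (4 * Vt + 12 / real m * V^2 + 6 / real m * V) / den)" for i j
  define L2 where "L2 i j = (let d = norm (feat_mean (D j) f - feat_mean (D i) f);
            V = (feat_tvar (D i) f + feat_tvar (D j) f) / d^2;
            \<Theta> = (feat_M4 (D i) f + feat_M4 (D j) f) / d^4;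
            den = (1 + (feat_tvar (D j) f - feat_tvar (D i) f) / (real m * d^2))^2
        in (3 / real m^3 * (\<Theta> + 2 * (real m - 1) * V^2)) / den)" for i j
  define A where "A i j = {\<omega> \<in> space (?SM \<Otimes>\<^sub>M D i). norm (f (snd \<omega>) - emp_centroid m f (fst \<omega>) j)^2 \<le> norm (f (snd \<omega>) - emp_centroid m f (fst \<omega>) i)^2}" for i j
  have mpos: "real m > 0" using assms(2) by simp
  have pairA: "A i j \<in> sets (?SM \<Otimes>\<^sub>M D i) \<and> measure (?SM \<Otimes>\<^sub>M D i) (A i j) \<le> L1 i j + L2 i j"
    if ij: "i < C" "j < C" "i \<noteq> j" for i j
  proof
    note pb = pair_bound[OF assms(2) ij assms(4) assms(5) assms(6) assms(8)[OF ij]]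
    show "A i j \<in> sets (?SM \<Otimes>\<^sub>M D i)" using pb(1) by (simp add: A_def)
    define \<delta> where "\<delta> = feat_mean (D j) f - feat_mean (D i) f"
    define d where "d = norm \<delta>"
    have d0: "d > 0" using assms(7)[OF ij] by (simp add: d_def \<delta>_def)
    have dv: "feat_dirvar (D i) f ((1 / d) *\<^sub>R \<delta>) = (\<integral>x. ((f x - feat_mean (D i) f) \<bullet> \<delta>)^2 \<partial>D i) / d^2"
    proof -
      have "feat_dirvar (D i) f ((1 / d) *\<^sub>R \<delta>) = (\<integral>x. ((f x - feat_mean (D i) f) \<bullet> \<delta>)^2 / d^2 \<partial>D i)"
        unfolding feat_dirvar_def
        by (intro Bochner_Integration.integral_cong refl) (simp add: power_divide inner_commute)
      then show ?thesis by simp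
    qed
    have "L1 i j + L2 i j = (4 * ((\<integral>x. ((f x - feat_mean (D i) f) \<bullet> \<delta>)^2 \<partial>D i) / d^2 / d^2)
        + 12 / real m * ((feat_tvar (D i) f + feat_tvar (D j) f) / d^2)^2 + 6 / real m * ((feat_tvar (D i) f + feat_tvar (D j) f) / d^2))
        / (1 + (feat_tvar (D j) f - feat_tvar (D i) f) / (real m * d^2))^2
      + (3 / real m^3 * ((feat_M4 (D i) f + feat_M4 (D j) f) / d^4 + 2 * (real m - 1) * ((feat_tvar (D i) f + feat_tvar (D j) f) / d^2)^2))
        / (1 + (feat_tvar (D j) f - feat_tvar (D i) f) / (real m * d^2))^2"
      unfolding L1_def L2_def Let_def by (simp only: \<delta>_def[symmetric] d_def[symmetric] dv)
    also have "\<dots> = (4 * (\<integral>x. ((f x - feat_mean (D i) f) \<bullet> \<delta>)^2 \<partial>D i)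
       + 12 * (feat_tvar (D i) f + feat_tvar (D j) f)^2 / real m
       + 6 * d^2 * (feat_tvar (D i) f + feat_tvar (D j) f) / real m
       + 3 / real m^3 * (feat_M4 (D i) f + feat_M4 (D j) f + 2 * (real m - 1) * (feat_tvar (D i) f + feat_tvar (D j) f)^2))
      / (d^2 + (feat_tvar (D j) f - feat_tvar (D i) f) / real m)^2"
      using assms(8)[OF ij] by (intro alg_final d0 mpos) (simp add: d_def \<delta>_def)
    finally show "measure (?SM \<Otimes>\<^sub>M D i) (A i j) \<le> L1 i j + L2 i j"
      using pb(2) by (simp add: A_def d_def \<delta>_def)
  qed
  have per_i: "measure (?SM \<Otimes>\<^sub>M D i) {\<omega> \<in> space (?SM \<Otimes>\<^sub>M D i). ncc_pred tb C (emp_centroid m f (fst \<omega>)) (f (snd \<omega>)) \<noteq> i}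
      \<le> (\<Sum>j\<in>{..<C} - {i}. L1 i j + L2 i j)" if i: "i < C" for i
  proof -
    interpret Di: prob_space "D i" using assms(4) i by auto
    interpret SMp: prob_space ?SM unfolding support_measure_def
      by (intro prob_space_PiM) (auto intro: assms(4))
    interpret PSp: prob_space "?SM \<Otimes>\<^sub>M D i" by (intro prob_space_pair SMp.prob_space_axioms Di.prob_space_axioms)
    have sub: "{\<omega> \<in> space (?SM \<Otimes>\<^sub>M D i). ncc_pred tb C (emp_centroid m f (fst \<omega>)) (f (snd \<omega>)) \<noteq> i}
        \<subseteq> (\<Union>j\<in>{..<C} - {i}. A i j)"
    proof
      fix \<omega> assume \<omega>: "\<omega> \<in> {\<omega> \<in> space (?SM \<Otimes>\<^sub>M D i). ncc_pred tb C (emp_centroid m f (fst \<omega>)) (f (snd \<omega>)) \<noteq> i}"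
      define g where "g c = norm (f (snd \<omega>) - emp_centroid m f (fst \<omega>) c)^2" for c
      define K where "K = {c. c < C \<and> (\<forall>c'<C. g c \<le> g c')}"
      have "0 \<in> {..<C}" using assms(1) by simp
      then have fin: "finite (g ` {..<C})" "g ` {..<C} \<noteq> {}" by auto
      obtain c0 where c0: "c0 < C" "g c0 = Min (g ` {..<C})"
        using Min_in[OF fin] by auto
      have "c0 \<in> K" unfolding K_def using c0 fin by auto
      then have tbK: "tb K \<in> K" using assms(3) unfolding tie_rule_def by blast
      have pred: "ncc_pred tb C (emp_centroid m f (fst \<omega>)) (f (snd \<omega>)) = tb K"
        by (simp add: ncc_pred_def K_def g_def)
      define j where "j = tb K"
      have "j < C" "g j \<le> g i" using tbK i by (auto simp: K_def j_def)
      moreover have "j \<noteq> i" using \<omega> pred by (simp add: j_def)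
      ultimately show "\<omega> \<in> (\<Union>j\<in>{..<C} - {i}. A i j)"
        using \<omega> by (auto simp: A_def g_def)
    qed
    have sets: "(\<lambda>j. A i j) ` ({..<C} - {i}) \<subseteq> sets (?SM \<Otimes>\<^sub>M D i)" using pairA i by auto
    have "measure (?SM \<Otimes>\<^sub>M D i) {\<omega> \<in> space (?SM \<Otimes>\<^sub>M D i). ncc_pred tb C (emp_centroid m f (fst \<omega>)) (f (snd \<omega>)) \<noteq> i}
      \<le> measure (?SM \<Otimes>\<^sub>M D i) (\<Union>j\<in>{..<C} - {i}. A i j)"
      using sub sets by (intro PSp.finite_measure_mono) auto
    also have "\<dots> \<le> (\<Sum>j\<in>{..<C} - {i}. measure (?SM \<Otimes>\<^sub>M D i) (A i j))"
      using sets by (intro PSp.finite_measure_subadditive_finite) auto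
    also have "\<dots> \<le> (\<Sum>j\<in>{..<C} - {i}. L1 i j + L2 i j)"
      using pairA i by (intro sum_mono) auto
    finally show ?thesis .
  qed
  have "ncc_err tb C m D f \<le> (1 / real C) * (\<Sum>i<C. \<Sum>j\<in>{..<C} - {i}. L1 i j + L2 i j)"
    unfolding ncc_err_def using per_i by (intro mult_left_mono sum_mono) auto
  also have "\<dots> = (1 / real C) * (\<Sum>i<C. \<Sum>j\<in>{..<C} - {i}. L1 i j) + (1 / real C) * (\<Sum>i<C. \<Sum>j\<in>{..<C} - {i}. L2 i j)"
    by (simp add: sum.distrib distrib_left)
  finally show ?thesis unfolding L1_def L2_def .
qed


end
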